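(* Let $P\subset\mathbb{R}^2\times\{0\}\subset\mathbb{R}^3$ be a Reuleaux polygon of width $1$ with vertices $p_1,\dots,p_n$, so that $P=\bigcap_{i=1}^nB(p_i,1)\cap\{z=0\}$. Let $\bar P=\bigcap_{i=1}^nB(p_i,1)\subset\mathbb{R}^3$ and $P^+=\bar P\cap\{z\ge 0\}$. Then (i) the diameter of $P^+$ is $1$; and (ii) for every point $x\in\partial P^+\cap\{z>0\}$ there is a point $y$ on the boundary of the Reuleaux polygon $P$ (in the plane $z=0$) with $d(x,y)=1$.
   Context: $B(p,1)$ is the closed unit ball in $\mathbb{R}^3$ centered at $p$; $z$ denotes the third coordinate; $d$ is Euclidean distance. A Reuleaux polygon of width $1$ is a planar convex set of constant width $1$ of the form $\bigcap_{i=1}^n D(p_i,1)$ (closed unit disks), where $n\ge 3$ is odd and the points $p_1,\dots,p_n$ are exactly its vertices (corner points of its boundary); its boundary consists of unit-radius circular arcs centered at the vertices. *)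

theory Defs
  imports "HOL-Analysis.Analysis"
begin

definition constant_width :: "real \<Rightarrow> (real^2) set \<Rightarrow> bool" where
  "constant_width w K \<longleftrightarrow> K \<noteq> {} \<and> bounded K \<and>
     (\<forall>u::real^2. norm u = 1 \<longrightarrow> (SUP x\<in>K. u \<bullet> x) - (INF x\<in>K. u \<bullet> x) = w)"

definition corner_point :: "(real^2) set \<Rightarrow> real^2 \<Rightarrow> bool" where
  "corner_point K x \<longleftrightarrow> x \<in> frontier K \<and>
     (\<exists>u v::real^2. norm u = 1 \<and> norm v = 1 \<and> u \<noteq> v \<and>
        (\<forall>y\<in>K. u \<bullet> y \<le> u \<bullet> x) \<and> (\<forall>y\<in>K. v \<bullet> y \<le> v \<bullet> x))"

definition reuleaux_polygon :: "(real^2) set \<Rightarrow> (real^2) set \<Rightarrow> bool" where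
  "reuleaux_polygon V P \<longleftrightarrow> finite V \<and> odd (card V) \<and> card V \<ge> 3 \<and>
     P = (\<Inter>p\<in>V. cball p 1) \<and> convex P \<and> constant_width 1 P \<and>
     V = {x. corner_point P x}"

definition emb :: "real^2 \<Rightarrow> real^3" where
  "emb p = vector [p$1, p$2, 0]"

end

theory Submission
  imports Defs
begin

definition proj :: "real^3 \<Rightarrow> real^2" where "proj x = vector [x$1, x$2]"

lemma dist_sq3: "(dist (x::real^3) y)^2 = (dist (proj x) (proj y))^2 + (x$3 - y$3)^2"
  unfolding dist_vec_def L2_set_def proj_def
  by (simp add: sum_3 sum_2 dist_real_def power2_abs)

lemma proj_emb[simp]: "proj (emb p) = p" unfolding proj_def emb_def
  by (simp add: vec_eq_iff forall_2)

lemma emb3[simp]: "emb p $ 3 = 0" unfolding emb_def by simp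

lemma dist_emb: "(dist x (emb p))^2 = (dist (proj x) p)^2 + (x$3)^2"
  using dist_sq3[of x "emb p"] by simp

lemma key:
  fixes x y :: "'a::real_inner"
  assumes diam: "\<forall>a\<in>P. \<forall>b\<in>P. dist a b \<le> 1"
    and PV: "P = (\<Inter>p\<in>V. cball p 1)" and xP: "x \<in> P" and yP: "y \<in> P"
    and r0: "0 \<le> r" and r1: "r \<le> 1" and xr: "\<forall>p\<in>V. dist x p \<le> r"
  shows "dist x y \<le> r"
proof (cases "y = x")
  case True then show ?thesis using r0 by simp
next
  case False
  define d where "d = norm (y - x)"
  have d0: "d > 0" using False d_def by simp
  define u where "u = (1/d) *\<^sub>R (y - x)"
  define c where "c = x - (1 - r) *\<^sub>R u"
  have nu: "norm u = 1" using d0 unfolding u_def d_def by simp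
  have "c \<in> P" unfolding PV
  proof
    fix p assume pV: "p \<in> V"
    have "dist p c \<le> dist p x + dist x c" by (rule dist_triangle)
    also have "dist x c = 1 - r" unfolding c_def dist_norm using nu r1 by simp
    finally have "dist p c \<le> dist p x + (1 - r)" .
    moreover have "dist p x \<le> r" using xr pV by (simp add: dist_commute)
    ultimately show "c \<in> cball p 1" by simp
  qed
  then have dc: "dist c y \<le> 1" using diam yP by blast
  have yx: "y - x = d *\<^sub>R u" unfolding u_def using d0 by simp
  have "y - c = (y - x) + (1 - r) *\<^sub>R u" unfolding c_def by (simp add: algebra_simps)
  also have "\<dots> = (d + (1 - r)) *\<^sub>R u" by (simp add: yx scaleR_left_distrib)
  finally have "y - c = (d + (1 - r)) *\<^sub>R u" .
  then have "dist c y = d + (1 - r)" using nu d0 r1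
    by (simp add: dist_norm norm_minus_commute[of c y])
  then show ?thesis using dc unfolding d_def using r1 by (simp add: dist_norm norm_minus_commute)
qed


lemma diam_le1:
  assumes cw: "constant_width 1 P" and a: "a \<in> P" and b: "b \<in> P"
  shows "dist a b \<le> 1"
proof (cases "a = b")
  case True then show ?thesis by simp
next
  case False
  define u where "u = (1 / norm (a - b)) *\<^sub>R (a - b)"
  have nu: "norm u = 1" using False unfolding u_def by simp
  have bd: "bounded P" and w: "(SUP x\<in>P. u \<bullet> x) - (INF x\<in>P. u \<bullet> x) = 1"
    using cw nu unfolding constant_width_def by auto
  have ba: "bdd_above ((\<lambda>x. u \<bullet> x) ` P)" and bb: "bdd_below ((\<lambda>x. u \<bullet> x) ` P)"
  proof -
    have "bounded ((\<lambda>x. u \<bullet> x) ` P)"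
      using bd by (intro bounded_linear_image bounded_linear_inner_right)
    then show "bdd_above ((\<lambda>x. u \<bullet> x) ` P)" "bdd_below ((\<lambda>x. u \<bullet> x) ` P)"
      by (auto intro: bounded_imp_bdd_above bounded_imp_bdd_below)
  qed
  have "u \<bullet> a \<le> (SUP x\<in>P. u \<bullet> x)" using ba a by (auto intro: cSUP_upper)
  moreover have "(INF x\<in>P. u \<bullet> x) \<le> u \<bullet> b" using bb b by (auto intro: cINF_lower)
  moreover have "u \<bullet> a - u \<bullet> b = u \<bullet> (a - b)" by (simp add: inner_diff_right)
  moreover have "u \<bullet> (a - b) = norm (a - b)"
    using False unfolding u_def by (simp add: power2_norm_eq_inner[symmetric] power2_eq_square)
  ultimately show ?thesis using w by (simp add: dist_norm)
qed

lemma dist_emb2: "dist (emb a) (emb b) = dist a b"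
proof -
  have "(dist (emb a) (emb b))^2 = (dist a b)^2" using dist_sq3[of "emb a" "emb b"] by simp
  then show ?thesis by (simp add: power2_eq_iff_nonneg)
qed

theorem lemma1:
  fixes V P :: "(real^2) set"
  assumes "reuleaux_polygon V P"
  defines "Pbar \<equiv> (\<Inter>p\<in>V. cball (emb p) (1::real))"
  defines "Pplus \<equiv> Pbar \<inter> {x::real^3. x$3 \<ge> 0}"
  shows "diameter Pplus = 1 \<and>
    (\<forall>x\<in>frontier Pplus. x$3 > 0 \<longrightarrow> (\<exists>y\<in>frontier P. dist x (emb y) = 1))"
proof -
  have finV: "finite V" and cV: "card V \<ge> 3" and PV: "P = (\<Inter>p\<in>V. cball p 1)"
    and cw: "constant_width 1 P" and Vc: "V = {x. corner_point P x}"
    using assms(1) unfolding reuleaux_polygon_def by blast+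
  have Vne: "V \<noteq> {}" using cV by auto
  have diamP: "\<forall>a\<in>P. \<forall>b\<in>P. dist a b \<le> 1" using diam_le1[OF cw] by blast
  have memP: "x \<in> Pplus \<longleftrightarrow> 0 \<le> x$3 \<and> (\<forall>p\<in>V. dist x (emb p) \<le> 1)" for x
    unfolding Pplus_def Pbar_def by (auto simp: dist_commute)
  have projP: "proj x \<in> P" and h1: "x$3 \<le> 1"
    and hp: "\<forall>p\<in>V. (dist (proj x) p)^2 \<le> 1 - (x$3)^2" if "x \<in> Pplus" for x
  proof -
    have d: "dist x (emb p) \<le> 1" if "p \<in> V" for p using memP \<open>x \<in> Pplus\<close> that by blast
    have sq: "(dist (proj x) p)^2 + (x$3)^2 \<le> 1" if "p \<in> V" for p
    proof -
      have "(dist x (emb p))^2 \<le> 1" using d[OF that] by (simp add: power_le_one)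
      then show ?thesis using dist_emb[of x p] by simp
    qed
    show "\<forall>p\<in>V. (dist (proj x) p)^2 \<le> 1 - (x$3)^2" using sq by (simp add: algebra_simps)
    show "proj x \<in> P" unfolding PV
    proof
      fix p assume "p \<in> V"
      then have "(dist (proj x) p)^2 \<le> 1" using sq[of p] by (smt (verit) zero_le_power2)
      then have "dist (proj x) p \<le> 1" by (simp add: power_le_one_iff)
      then show "proj x \<in> cball p 1" by (simp add: dist_commute)
    qed
    obtain p where "p \<in> V" using Vne by blast
    then have "(x$3)^2 \<le> 1" using sq[of p] by (smt (verit) zero_le_power2)
    then show "x$3 \<le> 1" using power2_le_imp_le[of "x$3" 1] by simp
  qed
  have bound: "dist x y \<le> 1" if xP: "x \<in> Pplus" and yP: "y \<in> Pplus" and hk: "y$3 \<le> x$3" for x y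
  proof -
    define h where "h = x$3"
    define k where "k = y$3"
    have k0: "0 \<le> k" using memP[of y] yP unfolding k_def by blast
    have h1': "h \<le> 1" using h1[OF xP] h_def by simp
    have h0: "0 \<le> h" using k0 hk h_def k_def by simp
    define r where "r = sqrt (1 - h^2)"
    have hh: "h^2 \<le> 1" using h0 h1' by (simp add: power_le_one)
    have r0: "0 \<le> r" and r1: "r \<le> 1" unfolding r_def using hh h0 by auto
    have "\<forall>p\<in>V. dist (proj x) p \<le> r"
    proof
      fix p assume "p \<in> V"
      then have "(dist (proj x) p)^2 \<le> 1 - h^2" using hp[OF xP] h_def by blast
      then show "dist (proj x) p \<le> r" unfolding r_def by (rule real_le_rsqrt)
    qed
    then have "dist (proj x) (proj y) \<le> r"
      using key[OF diamP PV projP[OF xP] projP[OF yP] r0 r1] by blast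
    then have "(dist (proj x) (proj y))^2 \<le> r^2" by (simp add: power_mono)
    also have "r^2 = 1 - h^2" unfolding r_def using hh by simp
    finally have "(dist x y)^2 \<le> 1 - h^2 + (h - k)^2" using dist_sq3[of x y] h_def k_def by simp
    also have "\<dots> \<le> 1"
    proof -
      have "k * k \<le> h * k" using k0 hk h_def k_def by (intro mult_right_mono) auto
      moreover have "0 \<le> h * k" using k0 h0 by simp
      ultimately show ?thesis by (simp add: power2_eq_square algebra_simps)
    qed
    finally show ?thesis using power2_le_imp_le[of "dist x y" 1] by simp
  qed
  have bdd: "bounded Pplus"
  proof -
    obtain p where "p \<in> V" using Vne by blast
    then have "Pplus \<subseteq> cball (emb p) 1" using memP by (auto simp: dist_commute)
    then show ?thesis using bounded_cball bounded_subset by blast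
  qed
  have embP: "emb a \<in> Pplus" if "a \<in> P" for a
    using that unfolding memP PV by (auto simp: dist_emb2 dist_commute)
  have d1: "diameter Pplus \<le> 1"
  proof (rule diameter_le)
    show "Pplus \<noteq> {} \<or> 0 \<le> (1::real)" by simp
    fix x y assume "x \<in> Pplus" "y \<in> Pplus"
    then have "dist x y \<le> 1"
      using bound[of x y] bound[of y x] by (cases "y$3 \<le> x$3") (auto simp: dist_commute)
    then show "norm (x - y) \<le> 1" by (simp add: dist_norm)
  qed
  have Pne: "P \<noteq> {}"
  proof -
    obtain p where "p \<in> V" using Vne by blast
    then have "corner_point P p" using Vc by blast
    then have "p \<in> frontier P" unfolding corner_point_def by blast
    then have "p \<in> closure P" by (simp add: frontier_def)
    then show ?thesis by auto
  qed
  have cP: "compact P"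
  proof (subst compact_eq_bounded_closed, rule conjI)
    show "bounded P" using cw unfolding constant_width_def by blast
    show "closed P" unfolding PV by (intro closed_INT) simp
  qed
  define u :: "real^2" where "u = axis 1 1"
  have nu: "norm u = 1" unfolding u_def by simp
  have w: "(SUP x\<in>P. u \<bullet> x) - (INF x\<in>P. u \<bullet> x) = 1" using cw nu unfolding constant_width_def by blast
  have cont: "continuous_on P (\<lambda>x. u \<bullet> x)" by (intro continuous_intros)
  obtain a where aP: "a \<in> P" and amax: "\<forall>y\<in>P. u \<bullet> y \<le> u \<bullet> a"
    using continuous_attains_sup[OF cP Pne cont] by blast
  obtain b where bP: "b \<in> P" and bmin: "\<forall>y\<in>P. u \<bullet> b \<le> u \<bullet> y"
    using continuous_attains_inf[OF cP Pne cont] by blast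
  have "(SUP x\<in>P. u \<bullet> x) = u \<bullet> a" using aP amax by (intro cSup_eq_maximum) auto
  moreover have "(INF x\<in>P. u \<bullet> x) = u \<bullet> b" using bP bmin by (intro cInf_eq_minimum) auto
  ultimately have "u \<bullet> (a - b) = 1" using w by (simp add: inner_diff_right)
  moreover have "u \<bullet> (a - b) \<le> norm u * norm (a - b)" by (rule norm_cauchy_schwarz)
  ultimately have "1 \<le> dist a b" using nu by (simp add: dist_norm)
  also have "dist a b = dist (emb a) (emb b)" by (simp add: dist_emb2)
  also have "\<dots> \<le> diameter Pplus" using bdd embP aP bP by (intro diameter_bounded_bound) auto
  finally have d2: "1 \<le> diameter Pplus" .
  have part2: "\<exists>y\<in>frontier P. dist x (emb y) = 1" if xf: "x \<in> frontier Pplus" and x3: "x$3 > 0" for x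
  proof -
    have clP: "closed Pplus" unfolding Pplus_def Pbar_def
      by (intro closed_Int closed_INT closed_halfspace_component_ge_cart) simp_all
    then have xP: "x \<in> Pplus" using xf frontier_subset_closed by blast
    have "\<exists>p\<in>V. dist x (emb p) = 1"
    proof (rule ccontr)
      assume "\<not> ?thesis"
      then have lt: "\<forall>p\<in>V. dist x (emb p) < 1" using xP memP by force
      define U where "U = {z::real^3. z$3 > 0} \<inter> (\<Inter>p\<in>V. ball (emb p) 1)"
      have "open U" unfolding U_def using finV
        by (intro open_Int open_INT open_ball open_halfspace_component_gt_cart) auto
      moreover have "x \<in> U" unfolding U_def using lt x3 by (auto simp: dist_commute)
      moreover have "U \<subseteq> Pplus"
      proof
        fix z assume "z \<in> U"
        then show "z \<in> Pplus" unfolding U_def memP[of z] by (auto simp: dist_commute less_imp_le)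
      qed
      ultimately have "x \<in> interior Pplus" by (rule interiorI)
      then show False using xf by (simp add: frontier_def)
    qed
    then obtain p where pV: "p \<in> V" and "dist x (emb p) = 1" by blast
    moreover have "p \<in> frontier P" using pV Vc unfolding corner_point_def by blast
    ultimately show ?thesis by blast
  qed
  show ?thesis using d1 d2 part2 by auto
qed

end
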